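(* Let $(B,\nu_B)$ be as in the context and let $\varphi,\psi:B\to S^1$ be measurable maps such that (1) $\varphi_*\nu_B$ and $\psi_*\nu_B$ have no atoms; (2) the essential images of $\varphi$ and $\psi$ both equal $S^1$; (3) $o(\varphi(x),\varphi(y),\varphi(z))=o(\psi(x),\psi(y),\psi(z))$ for almost every $(x,y,z)\in B^3$. Then the essential image $F\subset S^1\times S^1$ of the map $x\mapsto(\varphi(x),\psi(x))$ is the graph of an orientation preserving homeomorphism $h:S^1\to S^1$, and $h(\varphi(x))=\psi(x)$ for almost every $x\in B$.
   Context: $(B,\nu_B)$ is a standard Lebesgue probability space (in the paper, a $G$-space for a locally compact second countable group $G$ with $\mu$-stationary, doubly ergodic, amenable action). The essential image of a measurable map into a compact metric space is the support of the pushforward of $\nu_B$. The orientation cocycle $o:(S^1)^3\to\{-1,0,1\}$ is $1$ on positively oriented triples, $-1$ on negatively oriented triples, and $0$ if the points are not pairwise distinct. *)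

theory Defs
  imports "HOL-Probability.Probability"
begin

abbreviation S1 :: "complex set" where
  "S1 \<equiv> sphere 0 1"

definition ccw_angle :: "complex \<Rightarrow> complex \<Rightarrow> real" where
  "ccw_angle u v = (THE t. 0 \<le> t \<and> t < 2 * pi \<and> v = u * cis t)"

definition pos_oriented :: "complex \<Rightarrow> complex \<Rightarrow> complex \<Rightarrow> bool" where
  "pos_oriented x y z \<longleftrightarrow> x \<noteq> y \<and> y \<noteq> z \<and> x \<noteq> z \<and> ccw_angle x y < ccw_angle x z"

definition orient :: "complex \<Rightarrow> complex \<Rightarrow> complex \<Rightarrow> int" where
  "orient x y z =
     (if x = y \<or> y = z \<or> x = z then 0
      else if pos_oriented x y z then 1 else -1)"

definition measure_support :: "'a::topological_space measure \<Rightarrow> 'a set" where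
  "measure_support \<mu> = {p. \<forall>U. open U \<longrightarrow> p \<in> U \<longrightarrow> emeasure \<mu> U > 0}"

definition ess_image :: "'b measure \<Rightarrow> ('b \<Rightarrow> 'a::topological_space) \<Rightarrow> 'a set" where
  "ess_image M f = measure_support (distr M borel f)"

definition orient_pres_homeo :: "(complex \<Rightarrow> complex) \<Rightarrow> bool" where
  "orient_pres_homeo h \<longleftrightarrow>
     (\<exists>g. homeomorphism S1 S1 h g) \<and>
     (\<forall>x\<in>S1. \<forall>y\<in>S1. \<forall>z\<in>S1. orient (h x) (h y) (h z) = orient x y z)"

end

theory Submission imports Defs begin

definition det3 :: "complex \<Rightarrow> complex \<Rightarrow> complex \<Rightarrow> real" where
  "det3 x y z = Im (cnj (y - x) * (z - x))"

definition sgnr :: "real \<Rightarrow> int" where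
  "sgnr r = (if r > 0 then 1 else if r < 0 then -1 else 0)"

lemma ccw_angle_Arg2pi:
  assumes "u \<in> S1" "v \<in> S1"
  shows "ccw_angle u v = Arg2pi (v / u)"
proof -
  have u0: "u \<noteq> 0" using assms by auto
  have nv: "norm (v/u) = 1" using assms by (simp add: norm_divide)
  have A: "0 \<le> Arg2pi (v/u)" "Arg2pi (v/u) < 2*pi" using Arg2pi by auto
  have E: "v/u = cis (Arg2pi (v/u))"
    using Arg2pi_eq[of "v/u"] nv by (simp add: cis_conv_exp)
  show ?thesis unfolding ccw_angle_def
  proof (rule the_equality)
    show "0 \<le> Arg2pi (v / u) \<and> Arg2pi (v / u) < 2 * pi \<and> v = u * cis (Arg2pi (v / u))"
    proof -
      define c where "c = Arg2pi (v/u)"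
      have "u * cis c = u * (v/u)" using E c_def by simp
      also have "\<dots> = v" using u0 by simp
      finally show ?thesis using A c_def by simp
    qed
  next
    fix t assume t: "0 \<le> t \<and> t < 2 * pi \<and> v = u * cis t"
    then have "v/u = cis t" using u0 by simp
    then have "of_real 1 * exp (\<i> * of_real t) = v/u" by (simp add: cis_conv_exp)
    then show "t = Arg2pi (v/u)" using Arg2pi_unique[of 1 t "v/u"] t by simp
  qed
qed

lemma det3_rot:
  assumes "x \<in> S1"
  shows "det3 x y z = det3 1 (y/x) (z/x)"
proof -
  have x0: "x \<noteq> 0" using assms by auto
  have "cnj x * x = 1" using assms
    using complex_norm_square[of x] by (simp add: mult.commute)
  moreover have "cnj (y - x) * (z - x) = (cnj x * x) * (cnj (y/x - 1) * (z/x - 1))"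
    using x0 by (simp add: field_simps)
  ultimately show ?thesis unfolding det3_def by simp
qed

lemma trig_id0: fixes a b :: real shows "sin (2*b - 2*a) + sin (2*a) - sin (2*b) = 4 * sin a * sin b * sin (b - a)"
proof -
  have p: "(sin a)^2 + (cos a)^2 = 1" "(sin b)^2 + (cos b)^2 = 1" by simp_all
  show ?thesis
    unfolding sin_diff cos_diff sin_double cos_double
    using p by algebra
qed

lemma trig_id: fixes s t :: real shows "sin (t - s) + sin s - sin t = 4 * sin (s/2) * sin (t/2) * sin ((t-s)/2)"
  using trig_id0[of "t/2" "s/2"] by (simp add: diff_divide_distrib)

lemma det3_cis: "det3 1 (cis s) (cis t) = 4 * sin (s/2) * sin (t/2) * sin ((t-s)/2)"
proof -
  have "det3 1 (cis s) (cis t) = sin (t - s) + sin s - sin t"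
    unfolding det3_def by (simp add: sin_diff algebra_simps)
  then show ?thesis using trig_id by simp
qed

lemma det3_degen: "det3 x x z = 0" "det3 x y x = 0" "det3 x y y = 0"
  unfolding det3_def
proof -
  show "Im (cnj (x - x) * (z - x)) = 0" "Im (cnj (y - x) * (x - x)) = 0" by simp_all
  have "cnj (y - x) * (y - x) = of_real ((norm (y - x))^2)"
    using complex_norm_square[of "y-x"] by (simp add: mult.commute)
  then show "Im (cnj (y - x) * (y - x)) = 0" by simp
qed

lemma sin_half_pos: "0 < s \<Longrightarrow> s < 2*pi \<Longrightarrow> sin (s/2) > 0"
  by (rule sin_gt_zero) auto

lemma orient_det:
  assumes "x \<in> S1" "y \<in> S1" "z \<in> S1"
  shows "orient x y z = sgnr (det3 x y z)"
proof (cases "x = y \<or> y = z \<or> x = z")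
  case True
  then show ?thesis unfolding orient_def sgnr_def using det3_degen by auto
next
  case False
  have x0: "x \<noteq> 0" using assms by auto
  define s where "s = Arg2pi (y/x)"
  define t where "t = Arg2pi (z/x)"
  have ny: "norm (y/x) = 1" "norm (z/x) = 1" using assms by (simp_all add: norm_divide)
  have ys: "y/x = cis s" using Arg2pi_eq[of "y/x"] ny s_def by (simp add: cis_conv_exp)
  have zt: "z/x = cis t" using Arg2pi_eq[of "z/x"] ny t_def by (simp add: cis_conv_exp)
  have sr: "0 \<le> s" "s < 2*pi" "0 \<le> t" "t < 2*pi" using Arg2pi s_def t_def by auto
  have "s \<noteq> 0" using False ys x0 by auto
  with sr have s0: "0 < s" by simp
  have "t \<noteq> 0" using False zt x0 by auto
  with sr have t0: "0 < t" by simp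
  have "s \<noteq> t" using False ys zt x0 by (metis nonzero_divide_eq_eq)
  have ca: "ccw_angle x y = s" "ccw_angle x z = t"
    using ccw_angle_Arg2pi assms s_def t_def by auto
  have D: "det3 x y z = 4 * sin (s/2) * sin (t/2) * sin ((t-s)/2)"
    using det3_rot[OF assms(1), of y z] ys zt det3_cis by simp
  have p1: "sin (s/2) > 0" "sin (t/2) > 0" using sin_half_pos s0 t0 sr by auto
  show ?thesis
  proof (cases "s < t")
    case True
    have "sin ((t-s)/2) > 0" using True sr by (intro sin_gt_zero) auto
    then have "det3 x y z > 0" using D p1 by simp
    then show ?thesis using False True ca unfolding orient_def pos_oriented_def sgnr_def by auto
  next
    case f2: False
    then have "t < s" using \<open>s \<noteq> t\<close> by simp
    then have "sin ((s-t)/2) > 0" using sr by (intro sin_gt_zero) auto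
    moreover have "sin ((t-s)/2) = - sin ((s-t)/2)"
      by (metis minus_diff_eq minus_divide_left sin_minus)
    ultimately have "sin ((t-s)/2) < 0" by simp
    then have "det3 x y z < 0" using D p1 by (simp add: mult_pos_neg)
    then show ?thesis using False f2 ca unfolding orient_def pos_oriented_def sgnr_def by auto
  qed
qed

lemma det3_box:
  assumes "open R" "det3 a1 a2 a3 \<in> R"
  obtains A1 A2 A3 where "open A1" "open A2" "open A3" "a1 \<in> A1" "a2 \<in> A2" "a3 \<in> A3"
    "\<And>x1 x2 x3. x1 \<in> A1 \<Longrightarrow> x2 \<in> A2 \<Longrightarrow> x3 \<in> A3 \<Longrightarrow> det3 x1 x2 x3 \<in> R"
proof -
  define f where "f = (\<lambda>p::complex \<times> complex \<times> complex. det3 (fst p) (fst (snd p)) (snd (snd p)))"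
  have "continuous_on UNIV f" unfolding f_def det3_def by (intro continuous_intros)
  then have "open (f -` R)" using assms(1) by (simp add: open_vimage)
  moreover have "(a1, a2, a3) \<in> f -` R" using assms(2) by (simp add: f_def)
  ultimately obtain A1 B where AB: "open A1" "open B" "(a1, a2, a3) \<in> A1 \<times> B" "A1 \<times> B \<subseteq> f -` R"
    by (rule open_prod_elim)
  then have "(a2, a3) \<in> B" by simp
  with AB(2) obtain A2 A3 where A: "open A2" "open A3" "(a2, a3) \<in> A2 \<times> A3" "A2 \<times> A3 \<subseteq> B"
    by (rule open_prod_elim)
  show ?thesis
  proof (rule that[of A1 A2 A3])
    fix x1 x2 x3 assume "x1 \<in> A1" "x2 \<in> A2" "x3 \<in> A3"
    then have "(x1, x2, x3) \<in> f -` R" using AB(4) A(4) by blast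
    then show "det3 x1 x2 x3 \<in> R" by (simp add: f_def)
  qed (use AB A in auto)
qed

lemma det3_antipodal: "det3 b u (-u) = 2 * Im (cnj b * u)"
  unfolding det3_def by (simp add: algebra_simps)

lemma separating_u:
  assumes "b \<in> S1" "b' \<in> S1" "b \<noteq> b'"
  obtains u where "u \<in> S1" "det3 b u (-u) > 0" "det3 b' u (-u) < 0"
proof -
  define r where "r = norm (b - b')"
  have r0: "r > 0" using assms r_def by simp
  define u where "u = \<i> * (b - b') / of_real r"
  have "u \<in> S1" using r0 by (simp add: u_def r_def norm_mult norm_divide)
  have nb: "(Re b)^2 + (Im b)^2 = 1" "(Re b')^2 + (Im b')^2 = 1"
    using assms(1,2) by (simp_all add: cmod_def)
  have r2: "r^2 = (Re b - Re b')^2 + (Im b - Im b')^2" by (simp add: r_def cmod_def)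
  have k: "Re b * Re b' + Im b * Im b' < 1"
  proof -
    have "r^2 > 0" using r0 by simp
    then show ?thesis using r2 nb by (simp add: power2_eq_square algebra_simps)
  qed
  have "Im (cnj b * u) = (1 - (Re b * Re b' + Im b * Im b')) / r"
    using nb by (simp add: u_def power2_eq_square algebra_simps diff_divide_distrib add_divide_distrib)
  then have "det3 b u (-u) > 0" using k r0 by (simp add: det3_antipodal)
  moreover have "Im (cnj b' * u) = ((Re b * Re b' + Im b * Im b') - 1) / r"
    using nb by (simp add: u_def power2_eq_square algebra_simps diff_divide_distrib add_divide_distrib)
  then have "det3 b' u (-u) < 0" using k r0 by (simp add: det3_antipodal divide_neg_pos)
  ultimately show ?thesis using that \<open>u \<in> S1\<close> by blast
qed

lemma det3_nonzero:
  assumes "x \<in> S1" "y \<in> S1" "z \<in> S1" "x \<noteq> y" "y \<noteq> z" "x \<noteq> z"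
  shows "det3 x y z \<noteq> 0"
  using orient_det[OF assms(1-3)] assms(4-6) unfolding orient_def sgnr_def
  by (auto split: if_splits)

locale circ_ctx =
  fixes M :: "'b measure" and \<phi> \<psi> :: "'b \<Rightarrow> complex"
  assumes prob: "prob_space M"
    and mphi: "\<phi> \<in> borel_measurable M" and mpsi: "\<psi> \<in> borel_measurable M"
    and Sphi: "\<forall>x\<in>space M. \<phi> x \<in> S1" and Spsi: "\<forall>x\<in>space M. \<psi> x \<in> S1"
    and atphi: "\<forall>p. emeasure (distr M borel \<phi>) {p} = 0"
    and atpsi: "\<forall>p. emeasure (distr M borel \<psi>) {p} = 0"
    and essphi: "ess_image M \<phi> = S1" and esspsi: "ess_image M \<psi> = S1"
    and AEo: "AE t in M \<Otimes>\<^sub>M (M \<Otimes>\<^sub>M M).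
           orient (\<phi> (fst t)) (\<phi> (fst (snd t))) (\<phi> (snd (snd t)))
         = orient (\<psi> (fst t)) (\<psi> (fst (snd t))) (\<psi> (snd (snd t)))"
begin

definition "f = (\<lambda>x. (\<phi> x, \<psi> x))"
definition "\<mu> = distr M borel f"
definition "F = ess_image M f"

lemma f_meas: "f \<in> borel_measurable M"
  unfolding f_def using mphi mpsi by (rule borel_measurable_Pair)

lemma mu_open: "open U \<Longrightarrow> emeasure \<mu> U = emeasure M (f -` U \<inter> space M)"
  unfolding \<mu>_def by (rule emeasure_distr[OF f_meas]) auto

lemma sets_mu[simp]: "sets \<mu> = sets borel"
  unfolding \<mu>_def by simp

lemma F_iff: "p \<in> F \<longleftrightarrow> (\<forall>U. open U \<longrightarrow> p \<in> U \<longrightarrow> emeasure \<mu> U > 0)"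
  unfolding F_def ess_image_def measure_support_def \<mu>_def by simp

lemma notF: "p \<notin> F \<Longrightarrow> \<exists>W. open W \<and> p \<in> W \<and> emeasure \<mu> W = 0"
  unfolding F_iff by (auto simp: not_less)

lemma null_open:
  assumes "open U" "U \<inter> F = {}"
  shows "emeasure \<mu> U = 0"
proof -
  define \<F> where "\<F> = {W \<inter> U | W. open W \<and> emeasure \<mu> W = 0}"
  have o: "\<And>S. S \<in> \<F> \<Longrightarrow> open S" using assms(1) by (auto simp: \<F>_def)
  have "\<Union>\<F> = U"
  proof
    show "\<Union>\<F> \<subseteq> U" by (auto simp: \<F>_def)
    show "U \<subseteq> \<Union>\<F>"
    proof
      fix p assume "p \<in> U"
      then have "p \<notin> F" using assms(2) by auto
      then obtain W where "open W" "p \<in> W" "emeasure \<mu> W = 0" using notF by blast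
      then show "p \<in> \<Union>\<F>" using \<open>p \<in> U\<close> by (auto simp: \<F>_def)
    qed
  qed
  obtain \<F>' where F': "\<F>' \<subseteq> \<F>" "countable \<F>'" "\<Union>\<F>' = \<Union>\<F>"
    using Lindelof[of \<F>] o by blast
  have "(\<Union>S\<in>\<F>'. S) \<in> null_sets \<mu>"
  proof (rule null_sets_UN')
    show "countable \<F>'" by fact
    fix S assume "S \<in> \<F>'"
    then have "S \<in> \<F>" using F' by auto
    then obtain W where W: "S = W \<inter> U" "open W" "emeasure \<mu> W = 0" by (auto simp: \<F>_def)
    have "W \<in> null_sets \<mu>" using W by (simp add: null_sets_def)
    then show "S \<in> null_sets \<mu>"
      by (rule null_sets_subset) (use W assms(1) in auto)
  qed
  then have "U \<in> null_sets \<mu>" using F' \<open>\<Union>\<F> = U\<close> by simp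
  then show ?thesis by (simp add: null_sets_def)
qed

lemma closed_F: "closed F"
  unfolding closed_def open_subopen[of "- F"]
proof (intro ballI)
  fix p assume "p \<in> - F"
  then obtain W where W: "open W" "p \<in> W" "emeasure \<mu> W = 0" using notF by blast
  have "W \<subseteq> - F"
  proof
    fix q assume "q \<in> W"
    then show "q \<in> - F" using W F_iff by auto
  qed
  then show "\<exists>T. open T \<and> p \<in> T \<and> T \<subseteq> - F" using W by blast
qed

lemma F_sub: "F \<subseteq> S1 \<times> S1"
proof
  fix p assume p: "p \<in> F"
  show "p \<in> S1 \<times> S1"
  proof (rule ccontr)
    assume np: "p \<notin> S1 \<times> S1"
    have "open (- (S1 \<times> S1))" by (intro open_Compl closed_Times) auto
    moreover have "emeasure \<mu> (- (S1 \<times> S1)) = 0"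
    proof -
      have "f -` (- (S1 \<times> S1)) \<inter> space M = {}" using Sphi Spsi by (auto simp: f_def)
      then show ?thesis using mu_open[OF \<open>open (- (S1 \<times> S1))\<close>] by simp
    qed
    ultimately show False using p np F_iff by auto
  qed
qed

lemma AE_F: "AE x in M. f x \<in> F"
proof (rule AE_I')
  have "emeasure \<mu> (- F) = 0" using null_open closed_F by (simp add: open_Compl)
  then have "emeasure M (f -` (- F) \<inter> space M) = 0" using mu_open closed_F by (simp add: open_Compl)
  moreover have "f -` (- F) \<inter> space M \<in> sets M"
    using f_meas closed_F by (intro measurable_sets[OF f_meas]) auto
  ultimately show "f -` (- F) \<inter> space M \<in> null_sets M" by (simp add: null_sets_def)
  show "{x \<in> space M. f x \<notin> F} \<subseteq> f -` (- F) \<inter> space M" by auto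
qed

lemma marg1: "open A \<Longrightarrow> emeasure \<mu> (A \<times> UNIV) = emeasure (distr M borel \<phi>) A"
  by (subst emeasure_distr[OF mphi]) (auto simp: mu_open open_Times f_def vimage_def)

lemma marg2: "open B \<Longrightarrow> emeasure \<mu> (UNIV \<times> B) = emeasure (distr M borel \<psi>) B"
  by (subst emeasure_distr[OF mpsi]) (auto simp: mu_open open_Times f_def vimage_def)

lemma supp_phi: "a \<in> S1 \<Longrightarrow> open A \<Longrightarrow> a \<in> A \<Longrightarrow> emeasure (distr M borel \<phi>) A > 0"
  using essphi unfolding ess_image_def measure_support_def by auto

lemma supp_psi: "b \<in> S1 \<Longrightarrow> open B \<Longrightarrow> b \<in> B \<Longrightarrow> emeasure (distr M borel \<psi>) B > 0"
  using esspsi unfolding ess_image_def measure_support_def by auto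

lemma compact_F: "compact F"
proof -
  have "compact ((S1 \<times> S1) \<inter> F)"
    by (rule compact_Int_closed[OF compact_Times[OF compact_sphere compact_sphere] closed_F])
  moreover have "(S1 \<times> S1) \<inter> F = F" using F_sub by blast
  ultimately show ?thesis by simp
qed

lemma proj1: "a \<in> S1 \<Longrightarrow> \<exists>b. (a, b) \<in> F"
proof (rule ccontr)
  assume a: "a \<in> S1" and nb: "\<not> (\<exists>b. (a, b) \<in> F)"
  have "compact (fst ` F)" using compact_F by (intro compact_continuous_image continuous_intros)
  then have op: "open (- fst ` F)" by (simp add: open_Compl compact_imp_closed)
  have an: "a \<in> - fst ` F" using nb by force
  have "(- fst ` F) \<times> UNIV \<inter> F = {}" by force
  then have "emeasure \<mu> ((- fst ` F) \<times> UNIV) = 0" by (intro null_open open_Times op) auto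
  then have "emeasure (distr M borel \<phi>) (- fst ` F) = 0" using marg1[OF op] by simp
  with supp_phi[OF a op an] show False by simp
qed

lemma mu_sets: "U \<in> sets borel \<Longrightarrow> emeasure \<mu> U = emeasure M (f -` U \<inter> space M)"
  unfolding \<mu>_def by (rule emeasure_distr[OF f_meas]) auto

lemma KU_borel: "A \<in> sets borel \<Longrightarrow> A \<times> (UNIV::complex set) \<in> sets (borel :: (complex \<times> complex) measure)"
proof -
  assume A: "A \<in> sets borel"
  have "fst \<in> borel_measurable (borel :: (complex \<times> complex) measure)"
    by (intro borel_measurable_continuous_onI continuous_intros)
  then have "fst -` A \<inter> space borel \<in> sets (borel :: (complex \<times> complex) measure)"
    using A by (rule measurable_sets)
  moreover have "fst -` A \<inter> space borel = A \<times> (UNIV::complex set)" by auto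
  ultimately show ?thesis by simp
qed

lemma marg1': "A \<in> sets borel \<Longrightarrow> emeasure \<mu> (A \<times> UNIV) = emeasure (distr M borel \<phi>) A"
  by (subst emeasure_distr[OF mphi]) (auto simp: mu_sets[OF KU_borel] f_def vimage_def)

lemma finite_null_phi: "finite K \<Longrightarrow> emeasure (distr M borel \<phi>) K = 0"
  using atphi by (subst emeasure_eq_sum_singleton) auto

lemma avoid:
  assumes "finite K" "open V" "v \<in> V" "v \<in> S1"
  obtains x c where "(x, c) \<in> F" "x \<notin> K" "c \<in> V"
proof -
  have oK: "open (- K)" using assms(1) by (simp add: open_Compl finite_imp_closed)
  have cK: "K \<in> sets borel" using assms(1) by (simp add: finite_imp_closed borel_closed)
  have pos: "emeasure \<mu> (UNIV \<times> V) > 0" using marg2[OF assms(2)] supp_psi[OF assms(4,2,3)] by simp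
  have "UNIV \<times> V \<subseteq> (K \<times> UNIV) \<union> ((- K) \<times> V)" by auto
  moreover have m1: "K \<times> UNIV \<in> sets \<mu>" using KU_borel[OF cK] by simp
  moreover have m2: "(- K) \<times> V \<in> sets \<mu>" using oK assms(2) by (simp add: open_Times borel_open)
  ultimately have "emeasure \<mu> (UNIV \<times> V) \<le> emeasure \<mu> ((K \<times> UNIV) \<union> ((- K) \<times> V))"
    by (intro emeasure_mono) auto
  also have "\<dots> \<le> emeasure \<mu> (K \<times> UNIV) + emeasure \<mu> ((- K) \<times> V)"
    using m1 m2 by (intro emeasure_subadditive)
  also have "emeasure \<mu> (K \<times> UNIV) = 0" using marg1'[OF cK] finite_null_phi[OF assms(1)] by simp
  finally have "emeasure \<mu> ((- K) \<times> V) > 0" using pos by simp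
  then have "(- K) \<times> V \<inter> F \<noteq> {}"
    using null_open[of "(- K) \<times> V"] oK assms(2) by (auto simp: open_Times)
  then show ?thesis using that by auto
qed

lemma sign_region:
  assumes "r \<noteq> 0"
  obtains R where "open R" "r \<in> R" "\<And>x. x \<in> R \<Longrightarrow> sgnr x = sgnr r"
proof (cases "r > 0")
  case True
  show ?thesis by (rule that[of "{0<..}"]) (use True in \<open>auto simp: sgnr_def\<close>)
next
  case False
  then have "r < 0" using assms by simp
  show ?thesis by (rule that[of "{..<0}"]) (use \<open>r < 0\<close> in \<open>auto simp: sgnr_def\<close>)
qed

lemma triple:
  assumes F1: "(a1, b1) \<in> F" and F2: "(a2, b2) \<in> F" and F3: "(a3, b3) \<in> F"
    and da: "det3 a1 a2 a3 \<noteq> 0" and db: "det3 b1 b2 b3 \<noteq> 0"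
  shows "sgnr (det3 a1 a2 a3) = sgnr (det3 b1 b2 b3)"
proof -
  interpret prob_space M by (rule prob)
  interpret PS: pair_sigma_finite M M by unfold_locales
  obtain Ra where Ra: "open Ra" "det3 a1 a2 a3 \<in> Ra" "\<And>x. x \<in> Ra \<Longrightarrow> sgnr x = sgnr (det3 a1 a2 a3)"
    using sign_region[OF da] by blast
  obtain Rb where Rb: "open Rb" "det3 b1 b2 b3 \<in> Rb" "\<And>x. x \<in> Rb \<Longrightarrow> sgnr x = sgnr (det3 b1 b2 b3)"
    using sign_region[OF db] by blast
  obtain A1 A2 A3 where A: "open A1" "open A2" "open A3" "a1 \<in> A1" "a2 \<in> A2" "a3 \<in> A3"
    "\<And>x1 x2 x3. x1 \<in> A1 \<Longrightarrow> x2 \<in> A2 \<Longrightarrow> x3 \<in> A3 \<Longrightarrow> det3 x1 x2 x3 \<in> Ra"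
    using det3_box[OF Ra(1,2)] by blast
  obtain B1 B2 B3 where B: "open B1" "open B2" "open B3" "b1 \<in> B1" "b2 \<in> B2" "b3 \<in> B3"
    "\<And>x1 x2 x3. x1 \<in> B1 \<Longrightarrow> x2 \<in> B2 \<Longrightarrow> x3 \<in> B3 \<Longrightarrow> det3 x1 x2 x3 \<in> Rb"
    using det3_box[OF Rb(1,2)] by blast
  define Q1 where "Q1 = f -` (A1 \<times> B1) \<inter> space M"
  define Q2 where "Q2 = f -` (A2 \<times> B2) \<inter> space M"
  define Q3 where "Q3 = f -` (A3 \<times> B3) \<inter> space M"
  have Qs: "Q1 \<in> sets M" "Q2 \<in> sets M" "Q3 \<in> sets M"
    unfolding Q1_def Q2_def Q3_def using A B
    by (auto intro!: measurable_sets[OF f_meas] borel_open open_Times)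
  have Qp: "emeasure M Q1 > 0" "emeasure M Q2 > 0" "emeasure M Q3 > 0"
    unfolding Q1_def Q2_def Q3_def using A B F1 F2 F3
    by (auto simp: F_iff mu_open[symmetric] open_Times)
  define T where "T = Q1 \<times> (Q2 \<times> Q3)"
  have Ts: "T \<in> sets (M \<Otimes>\<^sub>M (M \<Otimes>\<^sub>M M))" unfolding T_def using Qs by auto
  have "emeasure (M \<Otimes>\<^sub>M (M \<Otimes>\<^sub>M M)) T = emeasure M Q1 * (emeasure M Q2 * emeasure M Q3)"
    unfolding T_def using Qs
    by (simp add: PS.P.emeasure_pair_measure_Times emeasure_pair_measure_Times)
  moreover have "emeasure M Q1 \<noteq> 0" "emeasure M Q2 \<noteq> 0" "emeasure M Q3 \<noteq> 0"
    using Qp by (metis less_irrefl)+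
  ultimately have Tp: "emeasure (M \<Otimes>\<^sub>M (M \<Otimes>\<^sub>M M)) T \<noteq> 0" by simp
  obtain N where N: "{x \<in> space (M \<Otimes>\<^sub>M (M \<Otimes>\<^sub>M M)). \<not> (orient (\<phi> (fst x)) (\<phi> (fst (snd x))) (\<phi> (snd (snd x)))
         = orient (\<psi> (fst x)) (\<psi> (fst (snd x))) (\<psi> (snd (snd x))))} \<subseteq> N"
    "emeasure (M \<Otimes>\<^sub>M (M \<Otimes>\<^sub>M M)) N = 0" "N \<in> sets (M \<Otimes>\<^sub>M (M \<Otimes>\<^sub>M M))"
    using AEo by (rule AE_E)
  have "\<not> T \<subseteq> N"
  proof
    assume "T \<subseteq> N"
    then have "emeasure (M \<Otimes>\<^sub>M (M \<Otimes>\<^sub>M M)) T \<le> emeasure (M \<Otimes>\<^sub>M (M \<Otimes>\<^sub>M M)) N"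
      using N(3) by (rule emeasure_mono)
    then show False using N(2) Tp by simp
  qed
  then obtain t where tT: "t \<in> T" and tN: "t \<notin> N" by blast
  have tsp: "t \<in> space (M \<Otimes>\<^sub>M (M \<Otimes>\<^sub>M M))" using Ts tT sets.sets_into_space by blast
  have eq: "orient (\<phi> (fst t)) (\<phi> (fst (snd t))) (\<phi> (snd (snd t)))
         = orient (\<psi> (fst t)) (\<psi> (fst (snd t))) (\<psi> (snd (snd t)))"
    using N(1) tN tsp by blast
  obtain t1 t2 t3 where t: "t = (t1, t2, t3)" by (cases t) auto
  have tq: "t1 \<in> Q1" "t2 \<in> Q2" "t3 \<in> Q3" using tT t T_def by auto
  have mem: "\<phi> t1 \<in> A1" "\<phi> t2 \<in> A2" "\<phi> t3 \<in> A3" "\<psi> t1 \<in> B1" "\<psi> t2 \<in> B2" "\<psi> t3 \<in> B3"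
    using tq by (auto simp: Q1_def Q2_def Q3_def f_def)
  have sp: "t1 \<in> space M" "t2 \<in> space M" "t3 \<in> space M" using tq by (auto simp: Q1_def Q2_def Q3_def)
  have "orient (\<phi> t1) (\<phi> t2) (\<phi> t3) = sgnr (det3 a1 a2 a3)"
    using orient_det[of "\<phi> t1" "\<phi> t2" "\<phi> t3"] Sphi sp Ra(3) A(7) mem by auto
  moreover have "orient (\<psi> t1) (\<psi> t2) (\<psi> t3) = sgnr (det3 b1 b2 b3)"
    using orient_det[of "\<psi> t1" "\<psi> t2" "\<psi> t3"] Spsi sp Rb(3) B(7) mem by auto
  ultimately show ?thesis using eq t by simp
qed

lemma graph_unique:
  assumes ab: "(a, b) \<in> F" and ab': "(a, b') \<in> F"
  shows "b = b'"
proof (rule ccontr)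
  assume ne: "b \<noteq> b'"
  have S: "a \<in> S1" "b \<in> S1" "b' \<in> S1" using ab ab' F_sub by auto
  obtain u where u: "u \<in> S1" "det3 b u (-u) > 0" "det3 b' u (-u) < 0"
    using separating_u[OF S(2,3) ne] by blast
  obtain A1 A2 A3 where A: "open A1" "open A2" "open A3" "b \<in> A1" "u \<in> A2" "-u \<in> A3"
    "\<And>x1 x2 x3. x1 \<in> A1 \<Longrightarrow> x2 \<in> A2 \<Longrightarrow> x3 \<in> A3 \<Longrightarrow> det3 x1 x2 x3 \<in> {0<..}"
    using det3_box[of "{0<..}" b u "-u"] u by auto
  obtain C1 C2 C3 where C: "open C1" "open C2" "open C3" "b' \<in> C1" "u \<in> C2" "-u \<in> C3"
    "\<And>x1 x2 x3. x1 \<in> C1 \<Longrightarrow> x2 \<in> C2 \<Longrightarrow> x3 \<in> C3 \<Longrightarrow> det3 x1 x2 x3 \<in> {..<0}"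
    using det3_box[of "{..<0}" b' u "-u"] u by auto
  have mu: "-u \<in> S1" using u by simp
  obtain x c where xc: "(x, c) \<in> F" "x \<notin> {a}" "c \<in> A2 \<inter> C2"
    using avoid[of "{a}" "A2 \<inter> C2" u] A C u by auto
  obtain y d where yd: "(y, d) \<in> F" "y \<notin> {a, x}" "d \<in> A3 \<inter> C3"
    using avoid[of "{a, x}" "A3 \<inter> C3" "-u"] A C mu by auto
  have Sx: "x \<in> S1" "y \<in> S1" using xc yd F_sub by auto
  have dn: "det3 a x y \<noteq> 0" using det3_nonzero[of a x y] S Sx xc yd by auto
  have p: "det3 b c d > 0" using A(7)[of b c d] A(4) xc yd by auto
  have n: "det3 b' c d < 0" using C(7)[of b' c d] C(4) xc yd by auto
  have "sgnr (det3 a x y) = sgnr (det3 b c d)" using triple[OF ab xc(1) yd(1) dn] p by simp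
  moreover have "sgnr (det3 a x y) = sgnr (det3 b' c d)" using triple[OF ab' xc(1) yd(1) dn] n by simp
  ultimately show False using p n by (simp add: sgnr_def)
qed

lemma F_swap: "(a, b) \<in> ess_image M (\<lambda>x. (\<psi> x, \<phi> x)) \<longleftrightarrow> (b, a) \<in> F"
proof -
  have g: "(\<lambda>x. (\<psi> x, \<phi> x)) \<in> borel_measurable M" using mpsi mphi by (rule borel_measurable_Pair)
  have os: "open U \<Longrightarrow> open (prod.swap -` U)" for U :: "(complex \<times> complex) set"
    by (simp add: open_vimage continuous_on_swap)
  have e: "open U \<Longrightarrow> emeasure (distr M borel (\<lambda>x. (\<psi> x, \<phi> x))) U = emeasure \<mu> (prod.swap -` U)" for U
    using os[of U] by (simp add: emeasure_distr[OF g] mu_open f_def vimage_def)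
  show ?thesis
    unfolding ess_image_def measure_support_def F_iff
  proof safe
    fix V assume H: "\<forall>U. open U \<longrightarrow> (a, b) \<in> U \<longrightarrow> 0 < emeasure (distr M borel (\<lambda>x. (\<psi> x, \<phi> x))) U"
      and V: "open V" "(b, a) \<in> V"
    have "0 < emeasure (distr M borel (\<lambda>x. (\<psi> x, \<phi> x))) (prod.swap -` V)"
      using H os[OF V(1)] V(2) by auto
    then show "0 < emeasure \<mu> V" using e[OF os[OF V(1)]] by (simp add: vimage_def)
  next
    fix U assume H: "\<forall>V. open V \<longrightarrow> (b, a) \<in> V \<longrightarrow> 0 < emeasure \<mu> V"
      and U: "open U" "(a, b) \<in> U"
    show "0 < emeasure (distr M borel (\<lambda>x. (\<psi> x, \<phi> x))) U"
      using H os[OF U(1)] U(2) e[OF U(1)] by auto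
  qed
qed

end

theorem lemma4p13:
  fixes M :: "'b measure" and \<phi> \<psi> :: "'b \<Rightarrow> complex"
  assumes "prob_space M"
    and "\<phi> \<in> borel_measurable M" and "\<psi> \<in> borel_measurable M"
    and "\<forall>x\<in>space M. \<phi> x \<in> S1" and "\<forall>x\<in>space M. \<psi> x \<in> S1"
    and "\<forall>p. emeasure (distr M borel \<phi>) {p} = 0"
    and "\<forall>p. emeasure (distr M borel \<psi>) {p} = 0"
    and "ess_image M \<phi> = S1" and "ess_image M \<psi> = S1"
    and "AE t in M \<Otimes>\<^sub>M (M \<Otimes>\<^sub>M M).
           orient (\<phi> (fst t)) (\<phi> (fst (snd t))) (\<phi> (snd (snd t)))
         = orient (\<psi> (fst t)) (\<psi> (fst (snd t))) (\<psi> (snd (snd t)))"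
  shows "\<exists>h. orient_pres_homeo h
           \<and> ess_image M (\<lambda>x. (\<phi> x, \<psi> x)) = {(u, h u) | u. u \<in> S1}
           \<and> (AE x in M. h (\<phi> x) = \<psi> x)"
proof -
  interpret A: circ_ctx M \<phi> \<psi> using assms unfolding circ_ctx_def by blast
  have AE2: "AE t in M \<Otimes>\<^sub>M (M \<Otimes>\<^sub>M M).
           orient (\<psi> (fst t)) (\<psi> (fst (snd t))) (\<psi> (snd (snd t)))
         = orient (\<phi> (fst t)) (\<phi> (fst (snd t))) (\<phi> (snd (snd t)))"
    using assms(10) by (rule eventually_mono) simp
  interpret B: circ_ctx M \<psi> \<phi> using assms AE2 unfolding circ_ctx_def by blast
  have BF: "(a, b) \<in> B.F \<longleftrightarrow> (b, a) \<in> A.F" for a b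
    unfolding B.F_def B.f_def using A.F_swap by simp
  define h where "h u = (THE v. (u, v) \<in> A.F)" for u
  have hF: "u \<in> S1 \<Longrightarrow> (u, h u) \<in> A.F" for u
  proof -
    assume "u \<in> S1"
    then obtain v where v: "(u, v) \<in> A.F" using A.proj1 by blast
    have "h u = v" unfolding h_def using v A.graph_unique by blast
    then show ?thesis using v by simp
  qed
  have hF2: "(u, v) \<in> A.F \<Longrightarrow> h u = v" for u v
    unfolding h_def using A.graph_unique by blast
  have graph: "A.F = {(u, h u) | u. u \<in> S1}"
  proof
    show "A.F \<subseteq> {(u, h u) | u. u \<in> S1}"
    proof
      fix p assume p: "p \<in> A.F"
      obtain u v where uv: "p = (u, v)" by (cases p)
      have "u \<in> S1" using p uv A.F_sub by auto
      then show "p \<in> {(u, h u) | u. u \<in> S1}" using hF2 p uv by auto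
    qed
    show "{(u, h u) | u. u \<in> S1} \<subseteq> A.F" using hF by auto
  qed
  have hS: "h ` S1 = S1"
  proof
    show "h ` S1 \<subseteq> S1"
    proof
      fix v assume "v \<in> h ` S1"
      then obtain u where u: "u \<in> S1" "v = h u" by blast
      then have "(u, h u) \<in> S1 \<times> S1" using hF A.F_sub by blast
      then show "v \<in> S1" using u by blast
    qed
    show "S1 \<subseteq> h ` S1"
    proof
      fix v assume v: "v \<in> S1"
      then obtain u where "(v, u) \<in> B.F" using B.proj1 by blast
      then have u: "(u, v) \<in> A.F" using BF by simp
      then have "u \<in> S1" using A.F_sub by auto
      then show "v \<in> h ` S1" using hF2[OF u] by force
    qed
  qed
  have inj: "inj_on h S1"
  proof (rule inj_onI)
    fix x y assume xy: "x \<in> S1" "y \<in> S1" "h x = h y"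
    have "(x, h x) \<in> A.F" "(y, h x) \<in> A.F" using hF[OF xy(1)] hF[OF xy(2)] xy(3) by auto
    then have "(h x, x) \<in> B.F" "(h x, y) \<in> B.F" using BF by auto
    then show "x = y" using B.graph_unique by blast
  qed
  have cont: "continuous_on S1 h"
  proof (rule continuous_from_closed_graph[of S1])
    show "compact S1" by simp
    show "h \<in> S1 \<rightarrow> S1" using hS by auto
    have "(\<lambda>x. (x, h x)) ` S1 = A.F" using graph by auto
    then show "closed ((\<lambda>x. (x, h x)) ` S1)" using A.closed_F by simp
  qed
  have homeo: "\<exists>g. homeomorphism S1 S1 h g"
    by (rule homeomorphism_compact) (use cont hS inj in auto)
  have ori: "orient (h x) (h y) (h z) = orient x y z" if xyz: "x \<in> S1" "y \<in> S1" "z \<in> S1" for x y z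
  proof (cases "x = y \<or> y = z \<or> x = z")
    case True
    then show ?thesis unfolding orient_def by auto
  next
    case False
    have hs: "h x \<in> S1" "h y \<in> S1" "h z \<in> S1" using hS xyz by auto
    have hd: "h x \<noteq> h y" "h y \<noteq> h z" "h x \<noteq> h z"
      using False inj xyz by (auto dest: inj_onD)
    have d1: "det3 x y z \<noteq> 0" using det3_nonzero xyz False by auto
    have d2: "det3 (h x) (h y) (h z) \<noteq> 0" using det3_nonzero hs hd by auto
    have "sgnr (det3 x y z) = sgnr (det3 (h x) (h y) (h z))"
      using A.triple[OF hF[OF xyz(1)] hF[OF xyz(2)] hF[OF xyz(3)] d1 d2] .
    then show ?thesis using orient_det xyz hs by simp
  qed
  have "orient_pres_homeo h" unfolding orient_pres_homeo_def using homeo ori by blast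
  moreover have "ess_image M (\<lambda>x. (\<phi> x, \<psi> x)) = {(u, h u) | u. u \<in> S1}"
    using graph unfolding A.F_def A.f_def .
  moreover have "AE x in M. h (\<phi> x) = \<psi> x"
    using A.AE_F by (rule eventually_mono) (auto simp: A.f_def hF2)
  ultimately show ?thesis by blast
qed

end
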